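(* Let $n,N\ge1$, $1\le b\le n$, and let $J\subseteq\mathbb{Z}_n$ with $|J|=g>0$. Let $\mathbf{c}=(b_{1,1},\dots,b_{n,1},b_{1,2},\dots,b_{n,2},\dots,b_{1,N},\dots,b_{n,N})\in\mathbb{F}_q^{nN}$ and let $\Delta(\mathbf{c})=(b_{i,j})$ be the associated $n\times N$ matrix. Suppose that for each $i\in J$ the $i$-th row of $\Delta(\mathbf{c})$ has exactly $\ell$ nonzero entries, and all other rows of $\Delta(\mathbf{c})$ are zero. Then $$w_b(\mathbf{c})\ge \ell\Big(g+\sum_{H\in\mathbb{H}(J),\,|H|\le b-1}|H|+\sum_{H\in\mathbb{H}(J),\,|H|\ge b}(b-1)\Big),$$ where $w_b(\mathbf{c})$ is the $b$-symbol weight of $\mathbf{c}$ as a vector of length $nN$.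
   Context: For a vector of length $L$, indices are in $\mathbb{Z}_L=\{1,\dots,L\}$ taken cyclically mod $L$. For $\mathbf{x}\in\mathbb{F}_q^L$, $\chi_b(\mathbf{x})=\{i\in\mathbb{Z}_L:(x_i,\dots,x_{i+b-1})\ne\mathbf{0}\}$ (indices mod $L$) and $w_b(\mathbf{x})=|\chi_b(\mathbf{x})|$. For $J\subseteq\mathbb{Z}_n$, a hole of $J$ of size $h\ge 1$ is a set $H=\{a+1,\dots,a+h\}\subseteq\mathbb{Z}_n\setminus J$ (indices mod $n$) with $a,a+h+1\in J$; $\mathbb{H}(J)$ is the set of all holes of $J$. The vector $\mathbf{c}\in\mathbb{F}_q^{nN}$ is identified with the $n\times N$ matrix $\Delta(\mathbf{c})$ whose $(i,j)$ entry $b_{i,j}$ is the coordinate of $\mathbf{c}$ in position $i+(j-1)n$. *)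

theory Defs
  imports Main
begin

definition cyc :: "nat \<Rightarrow> nat \<Rightarrow> nat" where
  "cyc L i = ((i + L - 1) mod L) + 1"

text \<open>Vectors of length L are functions nat => 'a, with coordinates at positions 1..L.
  chi_b(x) = set of i in Z_L with (x_i,...,x_{i+b-1}) nonzero (indices mod L).\<close>
definition chi_b :: "nat \<Rightarrow> nat \<Rightarrow> (nat \<Rightarrow> 'a::zero) \<Rightarrow> nat set" where
  "chi_b L b x = {i \<in> {1..L}. \<exists>k<b. x (cyc L (i + k)) \<noteq> 0}"

definition w_b :: "nat \<Rightarrow> nat \<Rightarrow> (nat \<Rightarrow> 'a::zero) \<Rightarrow> nat" where
  "w_b L b x = card (chi_b L b x)"

definition holes :: "nat \<Rightarrow> nat set \<Rightarrow> nat set set" where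
  "holes n J = {H. \<exists>a h. h \<ge> 1 \<and> a \<in> J \<and> cyc n (a + h + 1) \<in> J \<and>
                      H = cyc n ` {a + 1 .. a + h} \<and> H \<inter> J = {}}"

definition Delta :: "nat \<Rightarrow> (nat \<Rightarrow> 'a) \<Rightarrow> nat \<Rightarrow> nat \<Rightarrow> 'a" where
  "Delta n c i j = c (i + (j - 1) * n)"

end

theory Submission imports Defs begin

lemma cyc_eq: "1 \<le> n \<Longrightarrow> cyc n x = cyc n y \<longleftrightarrow> int n dvd int x - int y"
proof -
  assume n: "1 \<le> n"
  have "cyc n x = cyc n y \<longleftrightarrow> (x + n - 1) mod n = (y + n - 1) mod n"
    unfolding cyc_def by simp
  also have "\<dots> \<longleftrightarrow> int (x + n - 1) mod int n = int (y + n - 1) mod int n"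
    by (simp add: zmod_int[symmetric])
  also have "\<dots> \<longleftrightarrow> int n dvd int (x + n - 1) - int (y + n - 1)"
    by (rule mod_eq_dvd_iff)
  also have "int (x + n - 1) - int (y + n - 1) = int x - int y" using n by simp
  finally show ?thesis .
qed

lemma cyc_id: "z \<in> {1..L} \<Longrightarrow> cyc L z = z"
  unfolding cyc_def by (cases z) auto

lemma cyc_range: "1 \<le> L \<Longrightarrow> cyc L z \<in> {1..L}"
  unfolding cyc_def by (simp add: Suc_leI)

lemma cyc_cong: "1 \<le> L \<Longrightarrow> int L dvd int (cyc L z) - int z"
  using cyc_eq[of L "cyc L z" z] cyc_id[OF cyc_range] by simp

lemma range_eq: "x \<in> {1..L} \<Longrightarrow> y \<in> {1..L} \<Longrightarrow> int L dvd int x - int y \<Longrightarrow> x = y"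
  using cyc_eq[of L x y] cyc_id[of x L] cyc_id[of y L] by auto


lemma not_hit:
  assumes n: "1 \<le> n" and e: "e \<in> {1..n}" and tt: "t < t'" and t'n: "t' \<le> n"
    and d: "int n dvd (int P - int t) - (int P' - int t')"
    and dP: "int n dvd int P - int e" and dP': "int n dvd int P' - int e'"
  shows "cyc n (e' + n - (t' - t)) = e"
proof -
  have "int n dvd (int P - int e) - (int P' - int e') - ((int P - int t) - (int P' - int t')) + int n"
  proof -
    have "int n dvd (int P - int e) - (int P' - int e')" using dP dP' by (rule dvd_diff)
    then have "int n dvd (int P - int e) - (int P' - int e') - ((int P - int t) - (int P' - int t'))"
      using d by (rule dvd_diff)
    then show ?thesis by (rule dvd_add) simp
  qed
  moreover have "(int P - int e) - (int P' - int e') - ((int P - int t) - (int P' - int t')) + int n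
      = int (e' + n - (t' - t)) - int e"
    using tt t'n by (simp add: of_nat_diff)
  ultimately have "int n dvd int (e' + n - (t' - t)) - int e" by metis
  then have "cyc n (e' + n - (t' - t)) = cyc n e" using cyc_eq[OF n] by blast
  then show ?thesis using cyc_id[OF e] by simp
qed

theorem mainTheorem2:
  fixes c :: "nat \<Rightarrow> 'a::{field,finite}"
    and n N b g l :: nat and J :: "nat set"
  assumes "n \<ge> 1" and "N \<ge> 1" and "1 \<le> b" and "b \<le> n"
    and "J \<subseteq> {1..n}" and "card J = g" and "g > 0"
    and "\<And>i. i \<in> J \<Longrightarrow> card {j \<in> {1..N}. Delta n c i j \<noteq> 0} = l"
    and "\<And>i j. i \<in> {1..n} - J \<Longrightarrow> j \<in> {1..N} \<Longrightarrow> Delta n c i j = 0"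
  shows "w_b (n * N) b c \<ge>
           l * (g + (\<Sum>H \<in> {H \<in> holes n J. card H \<le> b - 1}. card H)
                + (\<Sum>H \<in> {H \<in> holes n J. card H \<ge> b}. b - 1))"
proof -
  note n = assms(1) and N = assms(2) and b1 = assms(3) and bn = assms(4) and Jn = assms(5)
  define L where "L = n * N"
  have L1: "1 \<le> L" using n N by (simp add: L_def)
  have nL: "n \<le> L" using N by (simp add: L_def)
  have ndvdL: "int n dvd int L" by (simp add: L_def)
  have finJ: "finite J" using Jn finite_subset by blast
  define s where "s e = (LEAST t. cyc n (e + n - (t+1)) \<in> J)" for e
  define m where "m e = min (s e) (b - 1)" for e
  have s_le: "s e \<le> n - 1" if "e \<in> J" for e
  proof -
    have "cyc n (e + n - ((n - 1) + 1)) \<in> J"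
      using that Jn n cyc_id[of e n] by auto
    then show ?thesis unfolding s_def by (rule Least_le)
  qed
  have s_not: "cyc n (e + n - u) \<notin> J" if "1 \<le> u" "u \<le> s e" for e u
  proof -
    have "u - 1 < s e" using that by simp
    then have "\<not> cyc n (e + n - ((u - 1) + 1)) \<in> J" unfolding s_def by (rule not_less_Least)
    then show ?thesis using that by simp
  qed
  define pos where "pos e j = e + (j - 1) * n" for e j
  define R where "R e = {j \<in> {1..N}. Delta n c e j \<noteq> 0}" for e
  define T where "T = Sigma J R"
  define C where "C ej = (\<lambda>t. cyc L (pos (fst ej) (snd ej) + L - t)) ` {0..m (fst ej)}" for ej
  have finT: "finite T" unfolding T_def R_def using finJ by auto
  have posT: "pos e j \<in> {1..L}" "int n dvd int (pos e j) - int e" "c (pos e j) \<noteq> 0"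
    if "(e, j) \<in> T" for e j
  proof -
    have e: "e \<in> {1..n}" and j: "j \<in> {1..N}" and D: "Delta n c e j \<noteq> 0"
      using that Jn unfolding T_def R_def by auto
    have "(j - 1) * n \<le> (N - 1) * n" using j by (intro mult_right_mono) auto
    moreover have "(N - 1) * n + n = L" using N unfolding L_def
      by (metis Suc_diff_le diff_Suc_1 mult.commute mult_Suc_right add.commute)
    moreover have "e \<le> n" using e by simp
    ultimately have "e + (j - 1) * n \<le> L" by linarith
    then show "pos e j \<in> {1..L}" using e unfolding pos_def by auto
    show "int n dvd int (pos e j) - int e" unfolding pos_def by simp
    show "c (pos e j) \<noteq> 0" using D unfolding Delta_def pos_def by simp
  qed
  have m_le: "m e \<le> n - 1" if "e \<in> J" for e using s_le[OF that] unfolding m_def by simp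
  have cardC: "card (C ej) = m (fst ej) + 1" if "ej \<in> T" for ej
  proof -
    obtain e j where ej: "ej = (e, j)" by force
    have eJ: "e \<in> J" using that ej unfolding T_def by auto
    have "inj_on (\<lambda>t. cyc L (pos e j + L - t)) {0..m e}"
    proof (rule inj_onI)
      fix t t' assume t: "t \<in> {0..m e}" and t': "t' \<in> {0..m e}"
        and eq: "cyc L (pos e j + L - t) = cyc L (pos e j + L - t')"
      have tL: "t \<le> L" "t' \<le> L" using t t' m_le[OF eJ] nL by auto
      have "int L dvd int (pos e j + L - t) - int (pos e j + L - t')"
        using eq cyc_eq[OF L1] by blast
      then have dv: "int L dvd int t' - int t" using tL by (simp add: of_nat_diff)
      show "t = t'"
      proof (rule ccontr)
        assume "t \<noteq> t'"
        then have "int t' - int t \<noteq> 0" by simp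
        then have "\<bar>int L\<bar> \<le> \<bar>int t' - int t\<bar>" using dv by (rule dvd_imp_le_int)
        moreover have "t \<le> n - 1" "t' \<le> n - 1" using t t' m_le[OF eJ] by auto
        then have "\<bar>int t' - int t\<bar> < int L" using nL n by linarith
        ultimately show False by simp
      qed
    qed
    then show ?thesis unfolding C_def ej by (simp add: card_image)
  qed
  have Csub: "C ej \<subseteq> chi_b L b c" if "ej \<in> T" for ej
  proof
    fix x assume x: "x \<in> C ej"
    obtain e j where ej: "ej = (e, j)" by force
    have eT: "(e, j) \<in> T" using that ej by simp
    have eJ: "e \<in> J" using eT unfolding T_def by auto
    obtain t where t: "t \<in> {0..m e}" and xd: "x = cyc L (pos e j + L - t)"
      using x unfolding C_def ej by auto
    have tL: "t \<le> L" using t m_le[OF eJ] nL by auto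
    have tb: "t < b" using t b1 unfolding m_def by auto
    have "int L dvd int (cyc L (pos e j + L - t)) - int (pos e j + L - t)" by (rule cyc_cong[OF L1])
    then have "int L dvd (int (x + t) - int (pos e j)) - int L"
      using tL xd by (simp add: of_nat_diff algebra_simps)
    then have "int L dvd int (x + t) - int (pos e j)"
      by (metis diff_add_cancel dvd_add dvd_refl)
    then have "cyc L (x + t) = cyc L (pos e j)" using cyc_eq[OF L1] by blast
    then have "cyc L (x + t) = pos e j" using cyc_id[OF posT(1)[OF eT]] by simp
    then have "c (cyc L (x + t)) \<noteq> 0" using posT(3)[OF eT] by simp
    then show "x \<in> chi_b L b c" unfolding chi_b_def using tb xd cyc_range[OF L1] by blast
  qed
  have disj: "C ej \<inter> C ej' = {}" if "ej \<in> T" "ej' \<in> T" "ej \<noteq> ej'" for ej ej'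
  proof (rule ccontr)
    assume "C ej \<inter> C ej' \<noteq> {}"
    then obtain x where x1: "x \<in> C ej" and x2: "x \<in> C ej'" by blast
    obtain e j where ej: "ej = (e, j)" by force
    obtain e' j' where ej': "ej' = (e', j')" by force
    have eT: "(e, j) \<in> T" and eT': "(e', j') \<in> T" using that ej ej' by auto
    have eJ: "e \<in> J" and eJ': "e' \<in> J" using eT eT' unfolding T_def by auto
    obtain t where t: "t \<in> {0..m e}" and xd: "x = cyc L (pos e j + L - t)"
      using x1 unfolding C_def ej by auto
    obtain t' where t': "t' \<in> {0..m e'}" and xd': "x = cyc L (pos e' j' + L - t')"
      using x2 unfolding C_def ej' by auto
    have tL: "t \<le> L" "t' \<le> L" using t t' m_le[OF eJ] m_le[OF eJ'] nL by auto
    have "cyc L (pos e j + L - t) = cyc L (pos e' j' + L - t')" using xd xd' by simp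
    then have "int L dvd int (pos e j + L - t) - int (pos e' j' + L - t')"
      using cyc_eq[OF L1] by blast
    moreover have "int (pos e j + L - t) - int (pos e' j' + L - t')
        = (int (pos e j) - int t) - (int (pos e' j') - int t')"
      using tL by (simp add: of_nat_diff)
    ultimately have dL: "int L dvd (int (pos e j) - int t) - (int (pos e' j') - int t')"
      by simp
    then have dn: "int n dvd (int (pos e j) - int t) - (int (pos e' j') - int t')"
      by (rule dvd_trans[OF ndvdL])
    have ts: "t \<le> s e" "t' \<le> s e'" using t t' unfolding m_def by auto
    have tn: "t \<le> n" "t' \<le> n" using ts s_le[OF eJ] s_le[OF eJ'] by auto
    have eR: "e \<in> {1..n}" "e' \<in> {1..n}" using eJ eJ' Jn by auto
    consider "t < t'" | "t' < t" | "t = t'" by linarith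
    then show False
    proof cases
      case 1
      have "cyc n (e' + n - (t' - t)) = e"
        by (rule not_hit[OF n eR(1) 1 tn(2) dn posT(2)[OF eT] posT(2)[OF eT']])
      have "1 \<le> t' - t" "t' - t \<le> s e'" using 1 ts by auto
      then have "cyc n (e' + n - (t' - t)) \<notin> J" by (rule s_not)
      then show False using \<open>cyc n (e' + n - (t' - t)) = e\<close> eJ by simp
    next
      case 2
      have dn2: "int n dvd (int (pos e' j') - int t') - (int (pos e j) - int t)"
        using dn by (simp add: dvd_diff_commute)
      have "cyc n (e + n - (t - t')) = e'"
        by (rule not_hit[OF n eR(2) 2 tn(1) dn2 posT(2)[OF eT'] posT(2)[OF eT]])
      have "1 \<le> t - t'" "t - t' \<le> s e" using 2 ts by auto
      then have "cyc n (e + n - (t - t')) \<notin> J" by (rule s_not)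
      then show False using \<open>cyc n (e + n - (t - t')) = e'\<close> eJ' by simp
    next
      case 3
      have "int L dvd int (pos e j) - int (pos e' j')" using dL 3 by simp
      then have pp: "pos e j = pos e' j'" by (rule range_eq[OF posT(1)[OF eT] posT(1)[OF eT']])
      have "cyc n (pos e j) = cyc n e" using cyc_eq[OF n] posT(2)[OF eT] by blast
      moreover have "cyc n (pos e' j') = cyc n e'" using cyc_eq[OF n] posT(2)[OF eT'] by blast
      ultimately have "cyc n (pos e j) = e" "cyc n (pos e' j') = e'"
        using cyc_id[OF eR(1)] cyc_id[OF eR(2)] by simp_all
      then have ee: "e = e'" using pp by simp
      then have "(j - 1) * n = (j' - 1) * n" using pp unfolding pos_def by simp
      then have "j - 1 = j' - 1" using n by simp
      moreover have "j \<ge> 1" "j' \<ge> 1" using eT eT' unfolding T_def R_def by auto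
      ultimately have "j = j'" by simp
      then show False using ee ej ej' that(3) by simp
    qed
  qed
  have finC: "finite (C ej)" for ej unfolding C_def by simp
  have cardR: "card (R e) = l" if "e \<in> J" for e
    unfolding R_def by (rule assms(8)[OF that])
  have "card (\<Union> (C ` T)) = (\<Sum>ej\<in>T. card (C ej))"
    by (rule card_UN_disjoint[OF finT]) (use finC disj in auto)
  also have "\<dots> = (\<Sum>ej\<in>T. m (fst ej) + 1)"
    by (rule sum.cong) (simp_all add: cardC)
  also have "\<dots> = (\<Sum>(e, j)\<in>Sigma J R. m e + 1)"
    unfolding T_def by (simp add: split_def)
  also have "\<dots> = (\<Sum>e\<in>J. \<Sum>j\<in>R e. m e + 1)"
    by (rule sum.Sigma[symmetric]) (use finJ in \<open>auto simp: R_def\<close>)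
  also have "\<dots> = (\<Sum>e\<in>J. l * (m e + 1))"
    by (rule sum.cong) (simp_all add: cardR)
  also have "\<dots> = l * (\<Sum>e\<in>J. m e + 1)"
    by (simp add: sum_distrib_left)
  also have "(\<Sum>e\<in>J. m e + 1) = g + (\<Sum>e\<in>J. m e)"
    using assms(6) by (simp only: sum.distrib) simp
  finally have cnt: "card (\<Union> (C ` T)) = l * (g + (\<Sum>e\<in>J. m e))" .
  have sub: "\<Union> (C ` T) \<subseteq> chi_b L b c" using Csub by blast
  have finchi: "finite (chi_b L b c)" unfolding chi_b_def by simp
  have "card (\<Union> (C ` T)) \<le> w_b L b c"
    unfolding w_b_def by (rule card_mono[OF finchi sub])
  define ho where "ho = holes n J"
  define i where "i e = cyc n ` {e + n - s e .. e + n - 1}" for e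
  have hoP: "ho \<subseteq> Pow {1..n}"
    unfolding ho_def holes_def using cyc_range[OF n] by auto
  have finho: "finite ho" using hoP finite_subset by (metis finite_Pow_iff finite_atLeastAtMost)
  have key: "\<forall>H\<in>ho. \<exists>e\<in>J. i e = H \<and> min (card H) (b - 1) \<le> m e"
  proof
    fix H assume "H \<in> ho"
    then obtain a h where h1: "h \<ge> 1" and aJ: "a \<in> J" and eJ: "cyc n (a + h + 1) \<in> J"
      and Hd: "H = cyc n ` {a + 1 .. a + h}" and HJ: "H \<inter> J = {}"
      unfolding ho_def holes_def by blast
    define e where "e = cyc n (a + h + 1)"
    have aR: "a \<in> {1..n}" using aJ Jn by auto
    have hn: "h \<le> n - 1"
    proof (rule ccontr)
      assume "\<not> h \<le> n - 1"
      then have "a + n \<in> {a + 1 .. a + h}" using n by auto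
      moreover have "cyc n (a + n) = a"
        using cyc_eq[OF n, of "a + n" a] cyc_id[OF aR] by simp
      ultimately have "a \<in> H" unfolding Hd by (metis imageI)
      then show False using HJ aJ by blast
    qed
    have edv: "int n dvd int e - int (a + h + 1)" unfolding e_def by (rule cyc_cong[OF n])
    have eR: "e \<in> {1..n}" unfolding e_def by (rule cyc_range[OF n])
    have hn': "h < n" "h + 1 \<le> e + n" using hn n eR by auto
    have inH: "cyc n x \<in> H" if "x \<in> {a + 1 .. a + h}" for x using that Hd by blast
    have seh: "s e = h" unfolding s_def
    proof (rule Least_equality)
      have "int n dvd int (e + n - (h + 1)) - int a"
      proof -
        have "int (e + n - (h + 1)) - int a = (int e - int (a + h + 1)) + int n"
          using hn' by (simp add: of_nat_diff)
        then show ?thesis using dvd_add[OF edv dvd_refl[of "int n"]] by (simp only:)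
      qed
      then have "cyc n (e + n - (h + 1)) = cyc n a" using cyc_eq[OF n] by blast
      then show "cyc n (e + n - (h + 1)) \<in> J" using cyc_id[OF aR] aJ by simp
    next
      fix y assume yJ: "cyc n (e + n - (y + 1)) \<in> J"
      show "h \<le> y"
      proof (rule ccontr)
        assume "\<not> h \<le> y"
        then have yh: "y < h" by simp
        have "int (e + n - (y + 1)) - int (a + h - y) = (int e - int (a + h + 1)) + int n"
          using yh hn' by (simp add: of_nat_diff)
        then have "int n dvd int (e + n - (y + 1)) - int (a + h - y)" using dvd_add[OF edv dvd_refl[of "int n"]] by (simp only:)
        then have "cyc n (e + n - (y + 1)) = cyc n (a + h - y)" using cyc_eq[OF n] by blast
        moreover have "cyc n (a + h - y) \<in> H" using yh by (intro inH) auto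
        ultimately show False using yJ HJ by auto
      qed
    qed
    have ieH: "i e = H"
    proof
      show "i e \<subseteq> H"
      proof
        fix z assume "z \<in> i e"
        then obtain x' where x': "x' \<in> {e + n - h .. e + n - 1}" and z: "z = cyc n x'"
          unfolding i_def seh by blast
        define x where "x = x' + (a + h + 1) - (e + n)"
        have xr: "x \<in> {a + 1 .. a + h}" using x' hn eR unfolding x_def by auto
        have le: "e + n \<le> x' + (a + h + 1)" using x' hn' by auto
        have "int x' - int x = (int e - int (a + h + 1)) + int n"
          using le unfolding x_def by (simp add: of_nat_diff)
        then have "int n dvd int x' - int x" using dvd_add[OF edv dvd_refl[of "int n"]] by (simp only:)
        then have "z = cyc n x" using z cyc_eq[OF n] by blast
        then show "z \<in> H" using inH xr by blast
      qed
    next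
      show "H \<subseteq> i e"
      proof
        fix z assume "z \<in> H"
        then obtain x where xr: "x \<in> {a + 1 .. a + h}" and z: "z = cyc n x" using Hd by blast
        define x' where "x' = x + (e + n) - (a + h + 1)"
        have x'r: "x' \<in> {e + n - h .. e + n - 1}" using xr hn eR unfolding x'_def by auto
        have le: "a + h + 1 \<le> x + (e + n)" using xr hn' by auto
        have "int x' - int x = (int e - int (a + h + 1)) + int n"
          using le unfolding x'_def by (simp add: of_nat_diff)
        then have "int n dvd int x' - int x" using dvd_add[OF edv dvd_refl[of "int n"]] by (simp only:)
        then have "cyc n x' = cyc n x" using cyc_eq[OF n] by blast
        then have "z = cyc n x'" using z by simp
        then show "z \<in> i e" unfolding i_def seh using x'r by blast
      qed
    qed
    have "card H \<le> h" using Hd card_image_le[of "{a + 1 .. a + h}" "cyc n"] by simp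
    then have "min (card H) (b - 1) \<le> m e" unfolding m_def seh by simp
    then show "\<exists>e\<in>J. i e = H \<and> min (card H) (b - 1) \<le> m e" using ieH eJ e_def by blast
  qed
  have hsum: "(\<Sum>H\<in>ho. min (card H) (b - 1)) \<le> (\<Sum>e\<in>J. m e)"
    by (rule sum_le_included[OF finho finJ _ key]) simp
  have split: "(\<Sum>H \<in> {H \<in> ho. card H \<le> b - 1}. card H) + (\<Sum>H \<in> {H \<in> ho. card H \<ge> b}. b - 1)
      = (\<Sum>H\<in>ho. min (card H) (b - 1))"
  proof -
    have "(\<Sum>H \<in> {H \<in> ho. card H \<le> b - 1}. card H) = (\<Sum>H \<in> {H \<in> ho. card H \<le> b - 1}. min (card H) (b - 1))"
      by (rule sum.cong) auto
    moreover have "(\<Sum>H \<in> {H \<in> ho. card H \<ge> b}. b - 1) = (\<Sum>H \<in> {H \<in> ho. card H \<ge> b}. min (card H) (b - 1))"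
      by (rule sum.cong) auto
    moreover have "ho = {H \<in> ho. card H \<le> b - 1} \<union> {H \<in> ho. card H \<ge> b}" using b1 by auto
    moreover have "{H \<in> ho. card H \<le> b - 1} \<inter> {H \<in> ho. card H \<ge> b} = {}" using b1 by auto
    moreover have "finite {H \<in> ho. card H \<le> b - 1}" "finite {H \<in> ho. card H \<ge> b}"
      using finho by simp_all
    ultimately show ?thesis
      using sum.union_disjoint[of "{H \<in> ho. card H \<le> b - 1}" "{H \<in> ho. card H \<ge> b}"
          "\<lambda>H. min (card H) (b - 1)"] by simp
  qed
  have fin: "l * (g + (\<Sum>H \<in> {H \<in> ho. card H \<le> b - 1}. card H) + (\<Sum>H \<in> {H \<in> ho. card H \<ge> b}. b - 1)) \<le> w_b L b c"
  proof -
    have "l * (g + (\<Sum>H \<in> {H \<in> ho. card H \<le> b - 1}. card H) + (\<Sum>H \<in> {H \<in> ho. card H \<ge> b}. b - 1))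
        = l * (g + (\<Sum>H\<in>ho. min (card H) (b - 1)))" using split by (simp only: add.assoc)
    also have "\<dots> \<le> l * (g + (\<Sum>e\<in>J. m e))"
      using hsum by (intro mult_left_mono add_left_mono) auto
    also have "\<dots> \<le> w_b L b c" using cnt \<open>card (\<Union> (C ` T)) \<le> w_b L b c\<close> by simp
    finally show ?thesis .
  qed
  then show ?thesis unfolding ho_def L_def .
qed

end
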